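(* Let $m,n\ge2$, $\lambda>0$, $C\in\mathbb{R}^{m\times n}$, let $a\in\Delta_m$, $b\in\Delta_n$ have strictly positive entries, let $P=S_\lambda(C,a,b)$, and let $G\in\mathbb{R}^{m\times n}$. Consider the following procedure (Algorithm 1): 1. $T\leftarrow P\odot G$; 2. $\tilde T\leftarrow T_{:,1:n-1}$, $\tilde P\leftarrow P_{:,1:n-1}\in\mathbb{R}^{m\times(n-1)}$; 3. $t^{(a)}\leftarrow T\mathbb{1}_n$, $\tilde t^{(b)}\leftarrow\tilde T^\top\mathbb{1}_m$; 4. $\begin{bmatrix}g_a\\ g_{\tilde b}\end{bmatrix}\leftarrow\begin{bmatrix}\mathrm{diag}(a) & \tilde P\\ \tilde P^\top & \mathrm{diag}(\tilde b)\end{bmatrix}^{-1}\begin{bmatrix}t^{(a)}\\ \tilde t^{(b)}\end{bmatrix}$; 5. $g_b\leftarrow[g_{\tilde b};0]\in\mathbb{R}^n$; 6. $U\leftarrow g_a\mathbb{1}_n^\top+\mathbb{1}_m g_b^\top$; 7. $G_C\leftarrow-\lambda^{-1}(T-P\odot U)$. Then the $(m+n-1)\times(m+n-1)$ matrix in step 4 is invertible, and $(x,y)=(\mathrm{vec}(G_C),[g_a;g_{\tilde b}])$ is the (unique) solution of $$\begin{bmatrix}\lambda\,\mathrm{diag}(p)^{-1} & \tilde E\\ \tilde E^\top & \mathbf{0}\end{bmatrix}\begin{bmatrix}x\\ -y\end{bmatrix}=\begin{bmatrix}-\mathrm{vec}(G)\\ \mathbf{0}\end{bmatrix},\quad p=\mathrm{vec}(P).$$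 Consequently, if $G=\nabla_P\ell$ for a loss $\ell$ depending on $(C,a,b)$ only through $P=S_\lambda(C,a,b)$ (as in Theorem 1), then $G_C=\nabla_C\ell$, $g_a=\nabla_a\ell$ and $g_{\tilde b}=\nabla_{\tilde b}\ell$.
   Context: $\Delta_m=\{a\in\mathbb{R}^m: a_i\ge 0,\ \sum_i a_i=1\}$; $\Pi(a,b)=\{P\in\mathbb{R}^{m\times n}_{\ge0}: P\mathbb{1}_n=a,\ P^\top\mathbb{1}_m=b\}$; $h(P)=-\sum_{i,j}P_{i,j}(\log P_{i,j}-1)$; $S_\lambda(C,a,b)=\arg\min_{P\in\Pi(a,b)}\langle P,C\rangle_F-\lambda h(P)$. $\odot$ is the entrywise (Hadamard) product, $\mathbb{1}_k$ the all-ones vector in $\mathbb{R}^k$. For $v\in\mathbb{R}^n$, $\tilde v=(v_1,\dots,v_{n-1})$. Vectorization is column-major ($\mathrm{vec}(X)_{(j-1)m+i}=X_{i,j}$). $E=[\mathbb{1}_n\otimes I_m,\ I_n\otimes\mathbb{1}_m]\in\mathbb{R}^{mn\times(m+n)}$ and $\tilde E$ is $E$ with its last column deleted. Theorem 1: for the implicit map $(c,a,\tilde b)\mapsto p$ defined by the KKT conditions of the Sinkhorn problem (with the last column-marginal constraint dropped and $\beta_n=0$), the gradients of $\ell=L(p)$ satisfy $\begin{bmatrix}\lambda\mathrm{diag}(p)^{-1}&\tilde E\\ \tilde E^\top&0\end{bmatrix}\begin{bmatrix}\nabla_c\ell\\-\nabla_{[a;\tilde b]}\ell\end{bmatrix}=\begin{bmatrix}-\nabla_p\ell\\0\end{bmatrix}$.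 *)

theory Defs
  imports "Jordan_Normal_Form.Matrix"
begin

definition in_simplex :: "nat \<Rightarrow> real vec \<Rightarrow> bool" where
  "in_simplex k a \<longleftrightarrow> dim_vec a = k \<and> (\<forall>i<k. a $ i \<ge> 0) \<and> (\<Sum>i<k. a $ i) = 1"

definition transport_polytope :: "real vec \<Rightarrow> real vec \<Rightarrow> real mat set" where
  "transport_polytope a b = {P. P \<in> carrier_mat (dim_vec a) (dim_vec b)
      \<and> (\<forall>i<dim_vec a. \<forall>j<dim_vec b. P $$ (i,j) \<ge> 0)
      \<and> (\<forall>i<dim_vec a. (\<Sum>j<dim_vec b. P $$ (i,j)) = a $ i)
      \<and> (\<forall>j<dim_vec b. (\<Sum>i<dim_vec a. P $$ (i,j)) = b $ j)}"

definition entropy :: "real mat \<Rightarrow> real" where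
  "entropy P = - (\<Sum>i<dim_row P. \<Sum>j<dim_col P. P $$ (i,j) * (ln (P $$ (i,j)) - 1))"

definition frob_inner :: "real mat \<Rightarrow> real mat \<Rightarrow> real" where
  "frob_inner P C = (\<Sum>i<dim_row P. \<Sum>j<dim_col P. P $$ (i,j) * C $$ (i,j))"

definition is_sinkhorn_solution :: "real \<Rightarrow> real mat \<Rightarrow> real vec \<Rightarrow> real vec \<Rightarrow> real mat \<Rightarrow> bool" where
  "is_sinkhorn_solution lam C a b P \<longleftrightarrow> P \<in> transport_polytope a b \<and>
     (\<forall>Q\<in>transport_polytope a b.
        frob_inner P C - lam * entropy P \<le> frob_inner Q C - lam * entropy Q)"

definition vec_cm :: "real mat \<Rightarrow> real vec" where
  "vec_cm X = vec (dim_row X * dim_col X) (\<lambda>k. X $$ (k mod dim_row X, k div dim_row X))"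

definition diag_of :: "real vec \<Rightarrow> real mat" where
  "diag_of v = mat (dim_vec v) (dim_vec v) (\<lambda>(i,j). if i = j then v $ i else 0)"

(* E = [1_n (x) I_m, I_n (x) 1_m] in R^{mn x (m+n)}; E_tilde drops the last column *)
definition E_mat :: "nat \<Rightarrow> nat \<Rightarrow> real mat" where
  "E_mat m n = mat (m*n) (m+n) (\<lambda>(k,c).
      if c < m then (if k mod m = c then 1 else 0)
      else (if k div m = c - m then 1 else 0))"

definition E_tilde :: "nat \<Rightarrow> nat \<Rightarrow> real mat" where
  "E_tilde m n = mat (m*n) (m+n-1) (\<lambda>(k,c). E_mat m n $$ (k,c))"

definition mat_inv :: "real mat \<Rightarrow> real mat" where
  "mat_inv K = (SOME B. B \<in> carrier_mat (dim_row K) (dim_row K) \<and> inverts_mat K B \<and> inverts_mat B K)"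

definition alg_T :: "real mat \<Rightarrow> real mat \<Rightarrow> real mat" where
  "alg_T P G = mat (dim_row P) (dim_col P) (\<lambda>(i,j). P $$ (i,j) * G $$ (i,j))"

definition alg_K :: "real mat \<Rightarrow> real vec \<Rightarrow> real vec \<Rightarrow> real mat" where
  "alg_K P a b = (let m = dim_row P; n = dim_col P;
      Pt = mat m (n-1) (\<lambda>(i,j). P $$ (i,j));
      bt = vec (n-1) (\<lambda>j. b $ j)
    in four_block_mat (diag_of a) Pt (transpose_mat Pt) (diag_of bt))"

definition alg_rhs :: "real mat \<Rightarrow> real mat \<Rightarrow> real vec" where
  "alg_rhs P G = (let m = dim_row P; n = dim_col P; T = alg_T P G
     in vec m (\<lambda>i. \<Sum>j<n. T $$ (i,j)) @\<^sub>v vec (n-1) (\<lambda>j. \<Sum>i<m. T $$ (i,j)))"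

definition alg_g :: "real mat \<Rightarrow> real vec \<Rightarrow> real vec \<Rightarrow> real mat \<Rightarrow> real vec" where
  "alg_g P a b G = mat_inv (alg_K P a b) *\<^sub>v alg_rhs P G"

definition alg_GC :: "real \<Rightarrow> real mat \<Rightarrow> real vec \<Rightarrow> real vec \<Rightarrow> real mat \<Rightarrow> real mat" where
  "alg_GC lam P a b G = (let m = dim_row P; n = dim_col P; g = alg_g P a b G;
      ga = vec m (\<lambda>i. g $ i);
      gb = vec n (\<lambda>j. if j < n - 1 then g $ (m + j) else 0);
      U = mat m n (\<lambda>(i,j). ga $ i + gb $ j);
      T = alg_T P G
    in mat m n (\<lambda>(i,j). - (1/lam) * (T $$ (i,j) - P $$ (i,j) * U $$ (i,j))))"

definition KKT_mat :: "real \<Rightarrow> real mat \<Rightarrow> real mat" where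
  "KKT_mat lam P = (let m = dim_row P; n = dim_col P; p = vec_cm P
     in four_block_mat (mat (m*n) (m*n) (\<lambda>(i,j). if i = j then lam / (p $ i) else 0))
          (E_tilde m n) (transpose_mat (E_tilde m n)) (0\<^sub>m (m+n-1) (m+n-1)))"

end

theory Submission
  imports Defs "Jordan_Normal_Form.Determinant"
begin


definition dd :: "nat \<Rightarrow> nat \<Rightarrow> nat \<Rightarrow> real" where
  "dd i i' k = (if k = i then 1 else 0) - (if k = i' then 1 else 0)"

lemma dd_sum: assumes "i < m" "i' < m" "i \<noteq> i'"
  shows "(\<Sum>k<m. dd i i' k * h k) = h i - h i'"
proof -
  have "(\<Sum>k<m. dd i i' k * h k) = (\<Sum>k<m. (if k = i then h k else 0)) - (\<Sum>k<m. (if k = i' then h k else 0))"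
    unfolding dd_def sum_subtractf[symmetric] by (rule sum.cong) auto
  also have "\<dots> = h i - h i'" using assms by (simp add: sum.delta)
  finally show ?thesis .
qed

lemma dd_dsum: assumes "i < m" "i' < m" "i \<noteq> i'" "j < n" "j' < n" "j \<noteq> j'"
  shows "(\<Sum>k<m. \<Sum>l<n. dd i i' k * dd j j' l * h k l) = h i j - h i j' - h i' j + h i' j'"
proof -
  have "(\<Sum>k<m. \<Sum>l<n. dd i i' k * dd j j' l * h k l) = (\<Sum>k<m. dd i i' k * (\<Sum>l<n. dd j j' l * h k l))"
    by (simp add: sum_distrib_left mult.assoc)
  also have "\<dots> = (\<Sum>k<m. dd i i' k * (h k j - h k j'))"
    using dd_sum[OF assms(4-6)] by simp
  also have "\<dots> = h i j - h i j' - (h i' j - h i' j')" using dd_sum[OF assms(1-3)] by simp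
  finally show ?thesis by simp
qed

lemma dd_rowsum: assumes "j < n" "j' < n" "j \<noteq> j'"
  shows "(\<Sum>l<n. dd j j' l) = 0"
  using dd_sum[OF assms, of "\<lambda>_. 1"] by simp

lemma convex_f: assumes "(y::real) > 0" "x \<ge> 0"
  shows "y * (ln y - 1) - x * (ln x - 1) \<le> ln y * (y - x)"
proof (cases "x = 0")
  case True then show ?thesis using assms by simp
next
  case False
  then have x: "x > 0" using assms by simp
  have "ln (y / x) \<le> y / x - 1" using ln_le_minus_one[of "y/x"] x assms by simp
  then have "x * ln (y / x) \<le> x * (y / x - 1)" using x by (simp add: mult_left_mono)
  then have "x * (ln y - ln x) \<le> y - x" using x assms by (simp add: ln_div right_diff_distrib)
  then show ?thesis by (simp add: algebra_simps)
qed

lemma obj_eq: assumes "X \<in> carrier_mat m n"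
  shows "frob_inner X C - lam * entropy X = (\<Sum>k<m. \<Sum>l<n. X $$ (k,l) * C $$ (k,l) + lam * (X $$ (k,l) * (ln (X $$ (k,l)) - 1)))"
  using assms unfolding frob_inner_def entropy_def
  by (simp add: sum.distrib sum_distrib_left)

lemma sinkhorn_pos:
  assumes lam: "lam > 0" and da: "dim_vec a = m" and db: "dim_vec b = n" and C: "C \<in> carrier_mat m n"
    and apos: "\<forall>i<m. a$i > 0" and bpos: "\<forall>j<n. b$j > 0"
    and sol: "is_sinkhorn_solution lam C a b P"
  shows "\<forall>i<m. \<forall>j<n. P $$ (i,j) > 0"
proof (rule ccontr)
  assume "\<not> ?thesis"
  then obtain i j where ij: "i < m" "j < n" and nP: "\<not> P $$ (i,j) > 0" by auto
  from sol have PT: "P \<in> transport_polytope a b" and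
    opt: "\<And>Q. Q \<in> transport_polytope a b \<Longrightarrow> frob_inner P C - lam * entropy P \<le> frob_inner Q C - lam * entropy Q"
    unfolding is_sinkhorn_solution_def by auto
  have Pc: "P \<in> carrier_mat m n" and Pnn: "\<And>k l. k < m \<Longrightarrow> l < n \<Longrightarrow> P $$ (k,l) \<ge> 0"
    and rs: "\<And>k. k < m \<Longrightarrow> (\<Sum>l<n. P $$ (k,l)) = a $ k"
    and cs: "\<And>l. l < n \<Longrightarrow> (\<Sum>k<m. P $$ (k,l)) = b $ l"
    using PT da db unfolding transport_polytope_def by auto
  have P0: "P $$ (i,j) = 0" using nP Pnn[OF ij] by simp
  obtain j' where j': "j' < n" "P $$ (i,j') > 0"
  proof -
    have "\<exists>l<n. P $$ (i,l) > 0"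
    proof (rule ccontr)
      assume "\<not> ?thesis"
      then have "(\<Sum>l<n. P $$ (i,l)) \<le> 0" by (intro sum_nonpos) (meson lessThan_iff not_less)
      then show False using rs[OF ij(1)] apos ij by fastforce
    qed
    then show ?thesis using that by blast
  qed
  obtain i' where i': "i' < m" "P $$ (i',j) > 0"
  proof -
    have "\<exists>k<m. P $$ (k,j) > 0"
    proof (rule ccontr)
      assume "\<not> ?thesis"
      then have "(\<Sum>k<m. P $$ (k,j)) \<le> 0" by (intro sum_nonpos) (meson lessThan_iff not_less)
      then show False using cs[OF ij(2)] bpos ij by fastforce
    qed
    then show ?thesis using that by blast
  qed
  have jj: "j \<noteq> j'" using j' P0 by auto
  have ii: "i \<noteq> i'" using i' P0 by auto
  define \<alpha> where "\<alpha> = P $$ (i,j')"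
  define \<beta> where "\<beta> = P $$ (i',j)"
  define \<gamma> where "\<gamma> = P $$ (i',j')"
  have al: "\<alpha> > 0" and be: "\<beta> > 0" and ga: "\<gamma> \<ge> 0" using j' i' Pnn[OF i'(1) j'(1)] unfolding \<alpha>_def \<beta>_def \<gamma>_def by auto
  define c where "c = C $$ (i,j) + C $$ (i',j') - C $$ (i,j') - C $$ (i',j)"
  define M where "M = ln (\<gamma> + 1) - ln (\<alpha>/2) - ln (\<beta>/2)"
  define t where "t = min (min 1 (min (\<alpha>/2) (\<beta>/2))) (exp (-(\<bar>c\<bar>/lam + \<bar>M\<bar> + 1)))"
  have t0: "t > 0" using al be unfolding t_def by auto
  have t1: "t \<le> 1" "t \<le> \<alpha>/2" "t \<le> \<beta>/2" unfolding t_def by auto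
  have t2: "ln t \<le> -(\<bar>c\<bar>/lam + \<bar>M\<bar> + 1)"
  proof -
    have "t \<le> exp (-(\<bar>c\<bar>/lam + \<bar>M\<bar> + 1))" unfolding t_def by auto
    then have "ln t \<le> ln (exp (-(\<bar>c\<bar>/lam + \<bar>M\<bar> + 1)))" using t0 by (subst ln_le_cancel_iff) auto
    then show ?thesis by simp
  qed
  define D where "D k l = dd i i' k * dd j j' l" for k l
  define Q where "Q = mat m n (\<lambda>(k,l). P $$ (k,l) + t * D k l)"
  have Qc: "Q \<in> carrier_mat m n" unfolding Q_def by auto
  have Qe: "\<And>k l. k < m \<Longrightarrow> l < n \<Longrightarrow> Q $$ (k,l) = P $$ (k,l) + t * D k l" unfolding Q_def by auto
  have Dvals: "D i j = 1" "D i' j' = 1" "D i j' = -1" "D i' j = -1"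
    using ii jj unfolding D_def dd_def by auto
  have Dz: "D k l = 0 \<or> (k,l) \<in> {(i,j),(i',j'),(i,j'),(i',j)}" for k l
    unfolding D_def dd_def by auto
  have Qpos: "Q $$ (k,l) > 0" if "k < m" "l < n" "D k l \<noteq> 0" for k l
  proof -
    have "(k,l) \<in> {(i,j),(i',j'),(i,j'),(i',j)}" using Dz[of k l] that by auto
    then show ?thesis using Qe[OF that(1,2)] Dvals P0 t0 t1 ga al be
      unfolding \<alpha>_def \<beta>_def \<gamma>_def by auto
  qed
  have Qnn: "Q $$ (k,l) \<ge> 0" if "k < m" "l < n" for k l
    using Qpos[OF that] Qe[OF that] Pnn[OF that] by (cases "D k l = 0") auto
  have QT: "Q \<in> transport_polytope a b"
  proof -
    have "(\<Sum>l<n. Q $$ (k,l)) = a $ k" if "k < m" for k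
    proof -
      have "(\<Sum>l<n. Q $$ (k,l)) = (\<Sum>l<n. P $$ (k,l)) + t * dd i i' k * (\<Sum>l<n. dd j j' l)"
        using Qe[OF that] by (simp add: sum.distrib sum_distrib_left D_def mult.assoc)
      then show ?thesis using rs[OF that] dd_rowsum[OF ij(2) j'(1) jj] by simp
    qed
    moreover have "(\<Sum>k<m. Q $$ (k,l)) = b $ l" if "l < n" for l
    proof -
      have "(\<Sum>k<m. Q $$ (k,l)) = (\<Sum>k<m. P $$ (k,l)) + t * dd j j' l * (\<Sum>k<m. dd i i' k)"
        using Qe that by (simp add: sum.distrib sum_distrib_left D_def sum_distrib_right ac_simps)
      then show ?thesis using cs[OF that] dd_rowsum[OF ij(1) i'(1) ii] by simp
    qed
    ultimately show ?thesis using Qc Qnn da db unfolding transport_polytope_def by auto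
  qed
  define f where "f x = x * (ln x - 1)" for x :: real
  have fb: "f (Q $$ (k,l)) - f (P $$ (k,l)) \<le> ln (Q $$ (k,l)) * (t * D k l)" if "k < m" "l < n" for k l
  proof (cases "D k l = 0")
    case True then show ?thesis using Qe[OF that] by simp
  next
    case False
    show ?thesis using convex_f[OF Qpos[OF that False] Pnn[OF that]] Qe[OF that] unfolding f_def by simp
  qed
  let ?h = "\<lambda>k l. C $$ (k,l) + lam * ln (Q $$ (k,l))"
  have "(frob_inner Q C - lam * entropy Q) - (frob_inner P C - lam * entropy P)
     = (\<Sum>k<m. \<Sum>l<n. (Q $$ (k,l) - P $$ (k,l)) * C $$ (k,l) + lam * (f (Q $$ (k,l)) - f (P $$ (k,l))))"
    unfolding obj_eq[OF Qc] obj_eq[OF Pc] f_def sum_subtractf[symmetric]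
    by (intro sum.cong refl) (simp add: algebra_simps)
  also have "\<dots> \<le> (\<Sum>k<m. \<Sum>l<n. t * (D k l * ?h k l))"
  proof (intro sum_mono)
    fix k l assume "k \<in> {..<m}" "l \<in> {..<n}"
    then have kl: "k < m" "l < n" by auto
    have "lam * (f (Q $$ (k,l)) - f (P $$ (k,l))) \<le> lam * (ln (Q $$ (k,l)) * (t * D k l))"
      using fb[OF kl] lam by (simp add: mult_left_mono)
    then show "(Q $$ (k,l) - P $$ (k,l)) * C $$ (k,l) + lam * (f (Q $$ (k,l)) - f (P $$ (k,l))) \<le> t * (D k l * ?h k l)"
      using Qe[OF kl] by (simp add: algebra_simps)
  qed
  also have "\<dots> = t * (\<Sum>k<m. \<Sum>l<n. dd i i' k * dd j j' l * ?h k l)"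
    by (simp add: sum_distrib_left D_def)
  also have "\<dots> = t * (?h i j - ?h i j' - ?h i' j + ?h i' j')"
    using dd_dsum[OF ij(1) i'(1) ii ij(2) j'(1) jj] by simp
  also have "\<dots> = t * (c + lam * (ln t + ln (\<gamma> + t) - ln (\<alpha> - t) - ln (\<beta> - t)))"
    using Qe ij i' j' Dvals P0 unfolding c_def \<alpha>_def \<beta>_def \<gamma>_def by (simp add: algebra_simps)
  also have "\<dots> < 0"
  proof -
    have "ln (\<gamma> + t) \<le> ln (\<gamma> + 1)" using t0 t1 ga by (subst ln_le_cancel_iff) auto
    moreover have "ln (\<alpha>/2) \<le> ln (\<alpha> - t)" using t0 t1 al by (subst ln_le_cancel_iff) auto
    moreover have "ln (\<beta>/2) \<le> ln (\<beta> - t)" using t0 t1 be by (subst ln_le_cancel_iff) auto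
    ultimately have "ln t + ln (\<gamma> + t) - ln (\<alpha> - t) - ln (\<beta> - t) \<le> ln t + M" unfolding M_def by simp
    also have "\<dots> \<le> -(\<bar>c\<bar>/lam + 1)" using t2 by simp
    finally have "lam * (ln t + ln (\<gamma> + t) - ln (\<alpha> - t) - ln (\<beta> - t)) \<le> lam * (-(\<bar>c\<bar>/lam + 1))"
      using lam by (simp add: mult_left_mono)
    also have "\<dots> = -\<bar>c\<bar> - lam" using lam by (simp add: algebra_simps)
    finally have "c + lam * (ln t + ln (\<gamma> + t) - ln (\<alpha> - t) - ln (\<beta> - t)) < 0" using lam by linarith
    then show ?thesis using t0 by (simp add: mult_pos_neg)
  qed
  finally show False using opt[OF QT] by simp
qed



lemma sum_split_add: "(\<Sum>c<(m::nat)+k. f c) = (\<Sum>c<m. f c) + (\<Sum>j<k. f (m+j)::'a::comm_monoid_add)"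
  by (induct k) (auto simp: add.assoc)

lemma sum_mn: "(\<Sum>k<(m::nat)*n. f k) = (\<Sum>j<n. \<Sum>i<m. f (j*m+i)::'a::comm_monoid_add)"
proof (induct n)
  case (Suc n)
  have "m * Suc n = m*n + m" by simp
  then show ?case using Suc sum_split_add[of f "m*n" m] by (simp add: add.commute mult.commute)
qed simp

lemma jmi_bound: "i < m \<Longrightarrow> j < n \<Longrightarrow> j*m+i < m*(n::nat)"
proof -
  assume "i < m" "j < n"
  then have "j*m + i < j*m + m" by simp
  also have "\<dots> = (j+1)*m" by simp
  also have "\<dots> \<le> n*m" using \<open>j<n\<close> by (intro mult_right_mono) auto
  finally show ?thesis by (simp add: mult.commute)
qed

lemma jmi_mod: "i < m \<Longrightarrow> (j*m+i) mod m = (i::nat)" by simp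
lemma jmi_div: "i < m \<Longrightarrow> (j*m+i) div m = (j::nat)" by simp


lemma Et_mult: assumes y: "dim_vec y = m+n-1" and k: "k < m*n"
  shows "(E_tilde m n *\<^sub>v y) $ k = y $ (k mod m) + (if k div m < n-1 then y $ (m + k div m) else 0)"
proof -
  have m: "m > 0" and n: "n > 0" using k by (auto intro: ccontr)
  have dn: "m + n - 1 = m + (n-1)" using n by simp
  have "(E_tilde m n *\<^sub>v y) $ k = (\<Sum>c<m+n-1. E_tilde m n $$ (k,c) * y $ c)"
    using k y unfolding E_tilde_def by (simp add: scalar_prod_def atLeast0LessThan)
  also have "\<dots> = (\<Sum>c<m+n-1. (if c < m then (if k mod m = c then y $ c else 0)
      else (if k div m = c - m then y $ c else 0)))"
    using k unfolding E_tilde_def E_mat_def by (intro sum.cong refl) auto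
  also have "\<dots> = (\<Sum>c<m. (if k mod m = c then y $ c else 0)) + (\<Sum>j<n-1. (if k div m = j then y $ (m+j) else 0))"
    unfolding dn sum_split_add by simp
  also have "\<dots> = y $ (k mod m) + (if k div m < n-1 then y $ (m + k div m) else 0)"
    using m by (simp add: sum.delta)
  finally show ?thesis .
qed

lemma EtT_mult: assumes x: "dim_vec x = m*n" and c: "c < m+n-1"
  shows "(transpose_mat (E_tilde m n) *\<^sub>v x) $ c = (if c < m then (\<Sum>j<n. x $ (j*m+c)) else (\<Sum>i<m. x $ ((c-m)*m+i)))"
proof -
  have "(transpose_mat (E_tilde m n) *\<^sub>v x) $ c = (\<Sum>k<m*n. E_tilde m n $$ (k,c) * x $ k)"
    using c x unfolding E_tilde_def by (simp add: scalar_prod_def atLeast0LessThan)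
  also have "\<dots> = (\<Sum>j<n. \<Sum>i<m. E_tilde m n $$ (j*m+i,c) * x $ (j*m+i))"
    by (rule sum_mn)
  also have "\<dots> = (\<Sum>j<n. \<Sum>i<m. (if c < m then (if i = c then x $ (j*m+i) else 0) else (if j = c - m then x $ (j*m+i) else 0)))"
    using c jmi_bound unfolding E_tilde_def E_mat_def by (intro sum.cong refl) auto
  also have "\<dots> = (if c < m then (\<Sum>j<n. x $ (j*m+c)) else (\<Sum>i<m. x $ ((c-m)*m+i)))"
  proof (cases "c < m")
    case True then show ?thesis by (simp add: sum.delta)
  next
    case False
    then have "c - m < n" using c by auto
    have "(\<Sum>j<n. \<Sum>i<m. (if j = c - m then x $ (j*m+i) else 0)) = (\<Sum>j<n. if j = c - m then (\<Sum>i<m. x $ (j*m+i)) else 0)"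
      by (intro sum.cong) auto
    then show ?thesis using False \<open>c - m < n\<close> by (simp add: sum.delta)
  qed
  finally show ?thesis .
qed

definition yb :: "nat \<Rightarrow> nat \<Rightarrow> real vec \<Rightarrow> nat \<Rightarrow> real" where
  "yb m n y j = (if j < n-1 then y $ (m+j) else 0)"

definition Krow :: "nat \<Rightarrow> nat \<Rightarrow> real mat \<Rightarrow> real mat \<Rightarrow> real vec \<Rightarrow> bool" where
  "Krow m n P G y \<longleftrightarrow> (\<forall>i<m. (\<Sum>j<n. P$$(i,j) * (y$i + yb m n y j - G$$(i,j))) = 0)
     \<and> (\<forall>j<n-1. (\<Sum>i<m. P$$(i,j) * (y$i + yb m n y j - G$$(i,j))) = 0)"

lemma all_mn: "(\<forall>k<(m::nat)*n. Q k) \<longleftrightarrow> (\<forall>i<m. \<forall>j<n. Q (j*m+i))"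
proof
  assume H: "\<forall>k<m*n. Q k" 
  show "\<forall>i<m. \<forall>j<n. Q (j*m+i)"
  proof (intro allI impI)
    fix i j assume "i < m" "j < n"
    then show "Q (j*m+i)" using H jmi_bound[of i m j n] by simp
  qed
next
  assume H: "\<forall>i<m. \<forall>j<n. Q (j*m+i)"
  show "\<forall>k<m*n. Q k"
  proof (intro allI impI)
    fix k assume k: "k < m*n"
    then have m: "m > 0" by (auto intro: ccontr)
    have "k div m < n" using k m by (simp add: div_less_iff_less_mult mult.commute)
    moreover have "k mod m < m" using m by simp
    ultimately have "Q ((k div m)*m + k mod m)" by (rule H[rule_format, rotated])
    then show "Q k" by simp
  qed
qed

lemma sum_yb: assumes "n \<ge> 1"
  shows "(\<Sum>j<n. f j * yb m n y j) = (\<Sum>j<n-1. f j * y $ (m+j))"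
proof -
  have "(\<Sum>j<n. f j * yb m n y j) = (\<Sum>j<(n-1)+1. f j * yb m n y j)" using assms by simp
  also have "\<dots> = (\<Sum>j<n-1. f j * y $ (m+j))" unfolding sum_split_add by (simp add: yb_def)
  finally show ?thesis .
qed



lemma K_iff:
  assumes P: "P \<in> carrier_mat m n" and da: "dim_vec a = m" and db: "dim_vec b = n"
    and rs: "\<And>i. i < m \<Longrightarrow> (\<Sum>j<n. P $$ (i,j)) = a $ i"
    and cs: "\<And>j. j < n \<Longrightarrow> (\<Sum>i<m. P $$ (i,j)) = b $ j"
    and G: "G \<in> carrier_mat m n" and y: "dim_vec y = m+n-1" and n: "n \<ge> 1"
  shows "(alg_K P a b *\<^sub>v y = alg_rhs P G) \<longleftrightarrow> Krow m n P G y"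
proof -
  let ?K = "alg_K P a b"
  have y': "dim_vec y = m+(n-1)" using y n by simp
  have dn: "m + n - 1 = m + (n-1)" using n by simp
  have Kc: "?K \<in> carrier_mat (m+(n-1)) (m+(n-1))" using P da db unfolding alg_K_def diag_of_def Let_def
    by (intro four_block_carrier_mat) auto
  have Ke: "?K $$ (r,c) = (if r < m then (if c < m then (if r = c then a $ r else 0) else P $$ (r, c-m))
     else (if c < m then P $$ (c, r-m) else (if r = c then b $ (r-m) else 0)))"
    if "r < m+(n-1)" "c < m+(n-1)" for r c
    using that P da db unfolding alg_K_def diag_of_def Let_def by auto
  have Kv: "(?K *\<^sub>v y) $ r = (\<Sum>c<m+(n-1). ?K $$ (r,c) * y $ c)" if "r < m+(n-1)" for r
  proof -
    have dr: "dim_row ?K = m+(n-1)" "dim_col ?K = m+(n-1)" using Kc by auto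
    have "(?K *\<^sub>v y) $ r = (\<Sum>c\<in>{0..<dim_vec y}. row ?K r $ c * y $ c)" using that dr by (simp add: scalar_prod_def)
    also have "\<dots> = (\<Sum>c<m+(n-1). ?K $$ (r,c) * y $ c)" using y' that dr by (simp add: atLeast0LessThan)
    finally show ?thesis .
  qed
  have T: "alg_T P G $$ (i,j) = P $$ (i,j) * G $$ (i,j)" if "i < m" "j < n" for i j
    using that P unfolding alg_T_def by auto
  have rhs1: "alg_rhs P G $ i = (\<Sum>j<n. P $$ (i,j) * G $$ (i,j))" if "i < m" for i
    using that P T unfolding alg_rhs_def Let_def by simp
  have rhs2: "alg_rhs P G $ (m+j) = (\<Sum>i<m. P $$ (i,j) * G $$ (i,j))" if "j < n-1" for j
    using that P T unfolding alg_rhs_def Let_def by simp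
  have drhs: "dim_vec (alg_rhs P G) = m + (n-1)" using P unfolding alg_rhs_def Let_def by simp
  have row1: "(?K *\<^sub>v y) $ i = a $ i * y $ i + (\<Sum>j<n-1. P $$ (i,j) * y $ (m+j))" if "i < m" for i
  proof -
    have "(?K *\<^sub>v y) $ i = (\<Sum>c<m+(n-1). ?K $$ (i,c) * y $ c)"
      by (rule Kv) (use that in simp)
    also have "\<dots> = (\<Sum>c<m. ?K $$ (i,c) * y $ c) + (\<Sum>j<n-1. ?K $$ (i,m+j) * y $ (m+j))"
      by (rule sum_split_add)
    also have "\<dots> = (\<Sum>c<m. (if i = c then a $ i * y $ c else 0)) + (\<Sum>j<n-1. P $$ (i,j) * y $ (m+j))"
      using Ke that by (intro arg_cong2[where f="(+)"] sum.cong) auto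
    finally show ?thesis using that by (simp add: sum.delta)
  qed
  have row2: "(?K *\<^sub>v y) $ (m+j) = (\<Sum>i<m. P $$ (i,j) * y $ i) + b $ j * y $ (m+j)" if "j < n-1" for j
  proof -
    have "(?K *\<^sub>v y) $ (m+j) = (\<Sum>c<m+(n-1). ?K $$ (m+j,c) * y $ c)"
      by (rule Kv) (use that in simp)
    also have "\<dots> = (\<Sum>c<m. ?K $$ (m+j,c) * y $ c) + (\<Sum>l<n-1. ?K $$ (m+j,m+l) * y $ (m+l))"
      by (rule sum_split_add)
    also have "\<dots> = (\<Sum>c<m. P $$ (c,j) * y $ c) + (\<Sum>l<n-1. (if j = l then b $ j * y $ (m+l) else 0))"
      using Ke that by (intro arg_cong2[where f="(+)"] sum.cong) auto
    finally show ?thesis using that by (simp add: sum.delta)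
  qed
  have eq1: "(\<Sum>j<n. P$$(i,j) * (y$i + yb m n y j - G$$(i,j))) = (?K *\<^sub>v y) $ i - alg_rhs P G $ i"
    if "i < m" for i
  proof -
    have "(\<Sum>j<n. P$$(i,j) * (y$i + yb m n y j - G$$(i,j)))
      = (\<Sum>j<n. P$$(i,j)) * y$i + (\<Sum>j<n. P$$(i,j) * yb m n y j) - (\<Sum>j<n. P$$(i,j) * G$$(i,j))"
      by (simp add: algebra_simps sum.distrib sum_subtractf sum_distrib_right sum_distrib_left)
    then show ?thesis using row1[OF that] rhs1[OF that] rs[OF that] sum_yb[OF n] by simp
  qed
  have eq2: "(\<Sum>i<m. P$$(i,j) * (y$i + yb m n y j - G$$(i,j))) = (?K *\<^sub>v y) $ (m+j) - alg_rhs P G $ (m+j)"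
    if "j < n-1" for j
  proof -
    have "(\<Sum>i<m. P$$(i,j) * (y$i + yb m n y j - G$$(i,j)))
      = (\<Sum>i<m. P$$(i,j) * y$i) + (\<Sum>i<m. P$$(i,j)) * y $ (m+j) - (\<Sum>i<m. P$$(i,j) * G$$(i,j))"
      using that by (simp add: algebra_simps sum.distrib sum_subtractf sum_distrib_right sum_distrib_left yb_def)
    then show ?thesis using row2[OF that] rhs2[OF that] cs[of j] that by simp
  qed
  have "(?K *\<^sub>v y = alg_rhs P G) \<longleftrightarrow> (\<forall>r<m+(n-1). (?K *\<^sub>v y) $ r = alg_rhs P G $ r)"
    using Kc drhs by (auto simp: vec_eq_iff)
  also have "\<dots> \<longleftrightarrow> (\<forall>i<m. (?K *\<^sub>v y) $ i = alg_rhs P G $ i) \<and> (\<forall>j<n-1. (?K *\<^sub>v y) $ (m+j) = alg_rhs P G $ (m+j))"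
  proof (intro iffI allI impI)
    fix r assume H: "(\<forall>i<m. (?K *\<^sub>v y) $ i = alg_rhs P G $ i) \<and> (\<forall>j<n-1. (?K *\<^sub>v y) $ (m+j) = alg_rhs P G $ (m+j))"
      and r: "r < m + (n-1)"
    show "(?K *\<^sub>v y) $ r = alg_rhs P G $ r"
    proof (cases "r < m")
      case True then show ?thesis using H by auto
    next
      case False
      then have "r = m + (r - m)" "r - m < n-1" using r by auto
      then show ?thesis using H by metis
    qed
  next
    assume H: "\<forall>r<m+(n-1). (?K *\<^sub>v y) $ r = alg_rhs P G $ r"
    show "(\<forall>i<m. (?K *\<^sub>v y) $ i = alg_rhs P G $ i) \<and> (\<forall>j<n-1. (?K *\<^sub>v y) $ (m+j) = alg_rhs P G $ (m+j))"
      using H by simp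
  qed
  also have "\<dots> \<longleftrightarrow> Krow m n P G y" unfolding Krow_def using eq1 eq2 by simp
  finally show ?thesis .
qed


lemma vec_cm_idx: assumes "X \<in> carrier_mat m n" "i < m" "j < n"
  shows "vec_cm X $ (j*m+i) = X $$ (i,j)"
  using assms jmi_bound[of i m j n] unfolding vec_cm_def by auto

lemma eq_solve: fixes p lam :: real assumes "p > 0" "lam > 0"
  shows "(lam / p * x - s = - g) \<longleftrightarrow> (x = p * (s - g) / lam)"
  using assms by (auto simp: field_simps)

lemma KKT_iff:
  assumes P: "P \<in> carrier_mat m n" and Ppos: "\<forall>i<m. \<forall>j<n. P$$(i,j) > 0" and lam: "lam > 0"
    and G: "G \<in> carrier_mat m n" and x: "dim_vec x = m*n" and y: "dim_vec y = m+n-1"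
    and m: "m \<ge> 1" and n: "n \<ge> 1"
  shows "KKT_mat lam P *\<^sub>v (x @\<^sub>v - y) = (- vec_cm G) @\<^sub>v 0\<^sub>v (m+n-1) \<longleftrightarrow>
     (\<forall>i<m. \<forall>j<n. x$(j*m+i) = P$$(i,j) * (y$i + yb m n y j - G$$(i,j)) / lam) \<and> Krow m n P G y"
proof -
  let ?D = "mat (m*n) (m*n) (\<lambda>(i,j). if i = j then lam / (vec_cm P $ i) else 0)"
  let ?E = "E_tilde m n"
  have dP: "dim_row P = m" "dim_col P = n" using P by auto
  have Ec: "?E \<in> carrier_mat (m*n) (m+n-1)" by (simp add: E_tilde_def)
  have xc: "x \<in> carrier_vec (m*n)" using x by (rule carrier_vecI)
  have yc: "-y \<in> carrier_vec (m+n-1)" using y by (intro carrier_vecI) simp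
  have EL: "KKT_mat lam P *\<^sub>v (x @\<^sub>v - y) = (?D *\<^sub>v x + ?E *\<^sub>v (-y)) @\<^sub>v (transpose_mat ?E *\<^sub>v x + 0\<^sub>m (m+n-1) (m+n-1) *\<^sub>v (-y))"
    unfolding KKT_mat_def Let_def dP
    by (rule four_block_mat_mult_vec[OF _ Ec transpose_carrier_mat[THEN iffD2, OF Ec] zero_carrier_mat xc yc]) simp
  have dG: "dim_vec (vec_cm G) = m*n" using G unfolding vec_cm_def by auto
  have "KKT_mat lam P *\<^sub>v (x @\<^sub>v - y) = (- vec_cm G) @\<^sub>v 0\<^sub>v (m+n-1) \<longleftrightarrow>
     (?D *\<^sub>v x + ?E *\<^sub>v (-y) = - vec_cm G \<and> transpose_mat ?E *\<^sub>v x + 0\<^sub>m (m+n-1) (m+n-1) *\<^sub>v (-y) = 0\<^sub>v (m+n-1))"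
    unfolding EL
  proof (rule append_vec_eq)
    show "?D *\<^sub>v x + ?E *\<^sub>v (-y) \<in> carrier_vec (m*n)" using Ec by (intro carrier_vecI) simp
    show "- vec_cm G \<in> carrier_vec (m*n)" using dG by (intro carrier_vecI) simp
  qed
  moreover have D1: "?D *\<^sub>v x + ?E *\<^sub>v (-y) = - vec_cm G \<longleftrightarrow>
     (\<forall>i<m. \<forall>j<n. x$(j*m+i) = P$$(i,j) * (y$i + yb m n y j - G$$(i,j)) / lam)"
  proof -
    have "?D *\<^sub>v x + ?E *\<^sub>v (-y) = - vec_cm G \<longleftrightarrow> (\<forall>k<m*n. (?D *\<^sub>v x + ?E *\<^sub>v (-y)) $ k = (- vec_cm G) $ k)"
      using dG Ec by (auto simp: vec_eq_iff)
    also have "\<dots> \<longleftrightarrow> (\<forall>i<m. \<forall>j<n. (?D *\<^sub>v x + ?E *\<^sub>v (-y)) $ (j*m+i) = (- vec_cm G) $ (j*m+i))"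
      by (rule all_mn)
    also have "\<dots> \<longleftrightarrow> (\<forall>i<m. \<forall>j<n. x$(j*m+i) = P$$(i,j) * (y$i + yb m n y j - G$$(i,j)) / lam)"
    proof -
      have equiv: "(?D *\<^sub>v x + ?E *\<^sub>v (-y)) $ (j*m+i) = (- vec_cm G) $ (j*m+i) \<longleftrightarrow>
          x$(j*m+i) = P$$(i,j) * (y$i + yb m n y j - G$$(i,j)) / lam" if i: "i < m" and j: "j < n" for i j
      proof -
      have k: "j*m+i < m*n" using jmi_bound[OF i j] .
      have Dx: "(?D *\<^sub>v x) $ (j*m+i) = lam / P$$(i,j) * x $ (j*m+i)"
      proof -
        have "(?D *\<^sub>v x) $ (j*m+i) = (\<Sum>c\<in>{0..<m*n}. (if j*m+i = c then lam / (vec_cm P $ (j*m+i)) else 0) * x $ c)"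
          using k x by (simp add: scalar_prod_def)
        also have "\<dots> = (\<Sum>c\<in>{0..<m*n}. if j*m+i = c then lam / (vec_cm P $ c) * x $ c else 0)"
          by (intro sum.cong) auto
        also have "\<dots> = lam / (vec_cm P $ (j*m+i)) * x $ (j*m+i)"
          using k by (simp add: sum.delta)
        finally show ?thesis using vec_cm_idx[OF P i j] by simp
      qed
      have Ey: "(?E *\<^sub>v (-y)) $ (j*m+i) = - (y$i + yb m n y j)"
      proof -
        have "(?E *\<^sub>v (-y)) $ (j*m+i) = (-y) $ ((j*m+i) mod m) + (if (j*m+i) div m < n-1 then (-y) $ (m + (j*m+i) div m) else 0)"
          by (rule Et_mult) (use y k in auto)
        also have "\<dots> = (-y) $ i + (if j < n-1 then (-y) $ (m + j) else 0)"
          using i by simp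
        also have "\<dots> = - (y$i + yb m n y j)"
        proof (cases "j < n-1")
          case True
          then have "m + j < dim_vec y" using y by simp
          then show ?thesis using True i y unfolding yb_def by simp
        next
          case False
          then show ?thesis using i y n unfolding yb_def by simp
        qed
        finally show ?thesis .
      qed
      have pos: "P$$(i,j) > 0" using Ppos i j by auto
      have L: "(?D *\<^sub>v x + ?E *\<^sub>v (-y)) $ (j*m+i) = lam / P$$(i,j) * x $ (j*m+i) - (y$i + yb m n y j)"
        using Dx Ey k Ec by simp
      have R: "(- vec_cm G) $ (j*m+i) = - G$$(i,j)" using vec_cm_idx[OF G i j] k dG by simp
      show "(?D *\<^sub>v x + ?E *\<^sub>v (-y)) $ (j*m+i) = (- vec_cm G) $ (j*m+i) \<longleftrightarrow>
          x$(j*m+i) = P$$(i,j) * (y$i + yb m n y j - G$$(i,j)) / lam"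
        unfolding L R by (rule eq_solve[OF pos lam])
      qed
      show ?thesis using equiv by auto
    qed
    finally show ?thesis .
  qed
  moreover have D2: "(transpose_mat ?E *\<^sub>v x + 0\<^sub>m (m+n-1) (m+n-1) *\<^sub>v (-y) = 0\<^sub>v (m+n-1)) \<longleftrightarrow> Krow m n P G y"
    if F: "\<forall>i<m. \<forall>j<n. x$(j*m+i) = P$$(i,j) * (y$i + yb m n y j - G$$(i,j)) / lam"
  proof -
    have "(transpose_mat ?E *\<^sub>v x + 0\<^sub>m (m+n-1) (m+n-1) *\<^sub>v (-y) = 0\<^sub>v (m+n-1)) \<longleftrightarrow>
       (\<forall>c<m+n-1. (transpose_mat ?E *\<^sub>v x) $ c = 0)"
    proof -
      have Z: "0\<^sub>m (m+n-1) (m+n-1) *\<^sub>v (-y) = 0\<^sub>v (m+n-1)"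
        by (rule eq_vecI) (use yc in auto)
      show ?thesis unfolding Z using Ec by (auto simp: vec_eq_iff)
    qed
    also have "\<dots> \<longleftrightarrow> (\<forall>c<m+n-1. (if c < m then (\<Sum>j<n. x $ (j*m+c)) else (\<Sum>i<m. x $ ((c-m)*m+i))) = 0)"
      using EtT_mult[OF x] by simp
    also have "\<dots> \<longleftrightarrow> (\<forall>c<m. (\<Sum>j<n. x $ (j*m+c)) = 0) \<and> (\<forall>j<n-1. (\<Sum>i<m. x $ (j*m+i)) = 0)"
    proof (intro iffI conjI allI impI)
      fix c assume H: "\<forall>c<m+n-1. (if c < m then (\<Sum>j<n. x $ (j*m+c)) else (\<Sum>i<m. x $ ((c-m)*m+i))) = 0"
      { assume "c < m" then show "(\<Sum>j<n. x $ (j*m+c)) = 0" using H[rule_format, of c] n by auto }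
      { assume "c < n-1" then show "(\<Sum>i<m. x $ (c*m+i)) = 0" using H[rule_format, of "m+c"] by auto }
    next
      fix c assume H: "(\<forall>c<m. (\<Sum>j<n. x $ (j*m+c)) = 0) \<and> (\<forall>j<n-1. (\<Sum>i<m. x $ (j*m+i)) = 0)"
        and c: "c < m+n-1"
      show "(if c < m then (\<Sum>j<n. x $ (j*m+c)) else (\<Sum>i<m. x $ ((c-m)*m+i))) = 0"
        using H c by auto
    qed
    also have "\<dots> \<longleftrightarrow> Krow m n P G y"
    proof -
      have a1: "(\<Sum>j<n. x $ (j*m+c)) = (\<Sum>j<n. P$$(c,j) * (y$c + yb m n y j - G$$(c,j))) / lam" if "c < m" for c
        using F that by (simp add: sum_divide_distrib)
      have a2: "(\<Sum>i<m. x $ (j*m+i)) = (\<Sum>i<m. P$$(i,j) * (y$i + yb m n y j - G$$(i,j))) / lam" if "j < n-1" for j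
        using F that by (simp add: sum_divide_distrib)
      show ?thesis unfolding Krow_def using a1 a2 lam by simp
    qed
    finally show ?thesis .
  qed
  ultimately show ?thesis by blast
qed



lemma core:
  fixes u w :: "nat \<Rightarrow> real"
  assumes Ppos: "\<forall>i<m. \<forall>j<n. P$$(i,j) > 0" and n: "n \<ge> 1" and wn: "w (n-1) = 0"
    and h1: "\<forall>i<m. (\<Sum>j<n. P$$(i,j) * (u i + w j)) = 0"
    and h2: "\<forall>j<n-1. (\<Sum>i<m. P$$(i,j) * (u i + w j)) = 0"
  shows "\<forall>i<m. \<forall>j<n. u i + w j = 0"
proof -
  have "(\<Sum>i<m. \<Sum>j<n. P$$(i,j) * (u i + w j)^2)
      = (\<Sum>i<m. \<Sum>j<n. u i * (P$$(i,j) * (u i + w j))) + (\<Sum>i<m. \<Sum>j<n. w j * (P$$(i,j) * (u i + w j)))"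
    by (simp add: sum.distrib[symmetric] power2_eq_square algebra_simps)
  also have "\<dots> = (\<Sum>i<m. u i * (\<Sum>j<n. P$$(i,j) * (u i + w j))) + (\<Sum>j<n. w j * (\<Sum>i<m. P$$(i,j) * (u i + w j)))"
    by (simp add: sum_distrib_left sum.swap[of _ "{..<m}"])
  also have "\<dots> = 0"
  proof -
    have "(\<Sum>i<m. u i * (\<Sum>j<n. P$$(i,j) * (u i + w j))) = 0" using h1 by simp
    moreover have "(\<Sum>j<n. w j * (\<Sum>i<m. P$$(i,j) * (u i + w j))) = 0"
    proof (rule sum.neutral, rule ballI)
      fix j assume "j \<in> {..<n}"
      then have "j < n-1 \<or> j = n-1" by auto
      then show "w j * (\<Sum>i<m. P$$(i,j) * (u i + w j)) = 0" using h2 wn by auto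
    qed
    ultimately show ?thesis by simp
  qed
  finally have S: "(\<Sum>i<m. \<Sum>j<n. P$$(i,j) * (u i + w j)^2) = 0" .
  have nn: "\<forall>i\<in>{..<m}. 0 \<le> (\<Sum>j<n. P$$(i,j) * (u i + w j)^2)"
  proof (intro ballI sum_nonneg mult_nonneg_nonneg)
    fix i j assume "i \<in> {..<m}" "j \<in> {..<n}"
    then show "0 \<le> P$$(i,j)" using Ppos by (simp add: less_imp_le)
  qed simp
  show ?thesis
  proof (intro allI impI)
    fix i j assume i: "i < m" and j: "j < n"
    have "(\<Sum>j<n. P$$(i,j) * (u i + w j)^2) = 0"
      using S nn i sum_nonneg_eq_0_iff[of "{..<m}" "\<lambda>i. (\<Sum>j<n. P$$(i,j) * (u i + w j)^2)"] by simp
    moreover have "\<forall>j\<in>{..<n}. 0 \<le> P$$(i,j) * (u i + w j)^2"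
    proof (intro ballI mult_nonneg_nonneg)
      fix j assume "j \<in> {..<n}"
      then show "0 \<le> P$$(i,j)" using Ppos i by (simp add: less_imp_le)
    qed simp
    ultimately have "P$$(i,j) * (u i + w j)^2 = 0"
      using j sum_nonneg_eq_0_iff[of "{..<n}" "\<lambda>j. P$$(i,j) * (u i + w j)^2"] by simp
    moreover have "P$$(i,j) > 0" using Ppos i j by simp
    ultimately show "u i + w j = 0" by simp
  qed
qed


lemma alg_K_carrier: assumes "P \<in> carrier_mat m n" "dim_vec a = m" "dim_vec b = n" "n \<ge> 1"
  shows "alg_K P a b \<in> carrier_mat (m+n-1) (m+n-1)"
proof -
  have "alg_K P a b \<in> carrier_mat (m+(n-1)) (m+(n-1))" using assms unfolding alg_K_def diag_of_def Let_def
    by (intro four_block_carrier_mat) auto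
  moreover have "m+(n-1) = m+n-1" using assms by simp
  ultimately show ?thesis by simp
qed

lemma alg_rhs_zero: assumes "P \<in> carrier_mat m n"
  shows "alg_rhs P (0\<^sub>m m n) = 0\<^sub>v (m+(n-1))"
proof (rule eq_vecI)
  have T: "alg_T P (0\<^sub>m m n) $$ (i,j) = 0" if "i < m" "j < n" for i j
    using assms that unfolding alg_T_def by simp
  fix i assume i: "i < dim_vec (0\<^sub>v (m+(n-1)))"
  show "alg_rhs P (0\<^sub>m m n) $ i = 0\<^sub>v (m+(n-1)) $ i"
    using assms i T unfolding alg_rhs_def Let_def by auto
qed (use assms in \<open>simp add: alg_rhs_def Let_def\<close>)

lemma K_inj:
  assumes P: "P \<in> carrier_mat m n" and da: "dim_vec a = m" and db: "dim_vec b = n"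
    and rs: "\<And>i. i < m \<Longrightarrow> (\<Sum>j<n. P $$ (i,j)) = a $ i"
    and cs: "\<And>j. j < n \<Longrightarrow> (\<Sum>i<m. P $$ (i,j)) = b $ j"
    and Ppos: "\<forall>i<m. \<forall>j<n. P$$(i,j) > 0" and m: "m \<ge> 1" and n: "n \<ge> 1"
    and v: "dim_vec v = m+n-1" and Kv: "alg_K P a b *\<^sub>v v = 0\<^sub>v (m+n-1)"
  shows "v = 0\<^sub>v (m+n-1)"
proof -
  have "alg_K P a b *\<^sub>v v = alg_rhs P (0\<^sub>m m n)" using Kv alg_rhs_zero[OF P] n by simp
  then have KR: "Krow m n P (0\<^sub>m m n) v" using K_iff[OF P da db rs cs _ v n] by simp
  have h1: "\<forall>i<m. (\<Sum>j<n. P$$(i,j) * (v$i + yb m n v j)) = 0"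
  proof (intro allI impI)
    fix i assume i: "i < m"
    have "(\<Sum>j<n. P$$(i,j) * (v$i + yb m n v j)) = (\<Sum>j<n. P$$(i,j) * (v$i + yb m n v j - 0\<^sub>m m n $$ (i,j)))"
      using i by (intro sum.cong) auto
    then show "(\<Sum>j<n. P$$(i,j) * (v$i + yb m n v j)) = 0" using KR i unfolding Krow_def by simp
  qed
  have h2: "\<forall>j<n-1. (\<Sum>i<m. P$$(i,j) * (v$i + yb m n v j)) = 0"
  proof (intro allI impI)
    fix j assume j: "j < n-1"
    have "(\<Sum>i<m. P$$(i,j) * (v$i + yb m n v j)) = (\<Sum>i<m. P$$(i,j) * (v$i + yb m n v j - 0\<^sub>m m n $$ (i,j)))"
      using j by (intro sum.cong) auto
    then show "(\<Sum>i<m. P$$(i,j) * (v$i + yb m n v j)) = 0" using KR j unfolding Krow_def by simp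
  qed
  have wn: "yb m n v (n-1) = 0" unfolding yb_def by simp
  have C: "\<forall>i<m. \<forall>j<n. v$i + yb m n v j = 0"
    by (rule core[OF Ppos n, of "yb m n v" "\<lambda>i. v$i"]) (use wn h1 h2 in auto)
  show ?thesis
  proof (rule eq_vecI)
    fix r assume r: "r < dim_vec (0\<^sub>v (m+n-1))"
    have u: "v$i = 0" if "i < m" for i
    proof -
      have "n - 1 < n" using n by simp
      then have "v$i + yb m n v (n-1) = 0" using C that by blast
      then show ?thesis using wn by simp
    qed
    show "v $ r = 0\<^sub>v (m+n-1) $ r"
    proof (cases "r < m")
      case True then show ?thesis using u r by simp
    next
      case False
      then have j: "r - m < n-1" using r by auto
      have "v$0 + yb m n v (r-m) = 0" using C m j by auto
      then show ?thesis using u[of 0] m j False r unfolding yb_def by simp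
    qed
  qed (use v in simp)
qed

theorem theorem2:
  fixes m n :: nat and lam :: real and C G P :: "real mat" and a b :: "real vec"
  assumes "m \<ge> 2" and "n \<ge> 2" and "lam > 0"
    and "C \<in> carrier_mat m n" and "G \<in> carrier_mat m n"
    and "in_simplex m a" and "in_simplex n b"
    and "\<forall>i<m. a $ i > 0" and "\<forall>j<n. b $ j > 0"
    and "is_sinkhorn_solution lam C a b P"
  shows "invertible_mat (alg_K P a b)
    \<and> KKT_mat lam P *\<^sub>v (vec_cm (alg_GC lam P a b G) @\<^sub>v (- alg_g P a b G))
        = (- vec_cm G) @\<^sub>v 0\<^sub>v (m+n-1)
    \<and> (\<forall>x y. dim_vec x = m*n \<longrightarrow> dim_vec y = m+n-1 \<longrightarrow>
         KKT_mat lam P *\<^sub>v (x @\<^sub>v (- y)) = (- vec_cm G) @\<^sub>v 0\<^sub>v (m+n-1) \<longrightarrow>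
         x = vec_cm (alg_GC lam P a b G) \<and> y = alg_g P a b G)"
proof -
  note A = assms
  have m: "m \<ge> 1" and n: "n \<ge> 1" using A by auto
  have lam: "lam > 0" using A by simp
  have G: "G \<in> carrier_mat m n" using A by simp
  have da: "dim_vec a = m" and db: "dim_vec b = n" using A unfolding in_simplex_def by auto
  have PT: "P \<in> transport_polytope a b" using A unfolding is_sinkhorn_solution_def by auto
  have P: "P \<in> carrier_mat m n"
    and rs: "\<And>i. i < m \<Longrightarrow> (\<Sum>j<n. P $$ (i,j)) = a $ i"
    and cs: "\<And>j. j < n \<Longrightarrow> (\<Sum>i<m. P $$ (i,j)) = b $ j"
    using PT da db unfolding transport_polytope_def by auto
  have Ppos: "\<forall>i<m. \<forall>j<n. P$$(i,j) > 0"
    by (rule sinkhorn_pos[OF lam da db]) (use A in auto)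
  define K where "K = alg_K P a b"
  define N where "N = m+n-1"
  have Kc: "K \<in> carrier_mat N N" unfolding K_def N_def by (rule alg_K_carrier[OF P da db n])
  have "det K \<noteq> 0"
  proof
    assume "det K = 0"
    then obtain v where v: "v \<in> carrier_vec N" "v \<noteq> 0\<^sub>v N" "K *\<^sub>v v = 0\<^sub>v N"
      using det_0_iff_vec_prod_zero_field[OF Kc] by auto
    have "v = 0\<^sub>v N" unfolding N_def
      by (rule K_inj[OF P da db rs cs Ppos m n]) (use v in \<open>auto simp: K_def N_def\<close>)
    then show False using v by simp
  qed
  from det_non_zero_imp_unit[OF Kc this, of "()"]
  obtain B where B: "B \<in> carrier_mat N N" "B * K = 1\<^sub>m N" "K * B = 1\<^sub>m N"
    unfolding Units_def ring_mat_def by auto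
  have inv: "invertible_mat K"
    unfolding invertible_mat_def inverts_mat_def square_mat.simps using Kc B by auto
  define Bi where "Bi = mat_inv K"
  have "Bi \<in> carrier_mat (dim_row K) (dim_row K) \<and> inverts_mat K Bi \<and> inverts_mat Bi K"
    unfolding Bi_def mat_inv_def
    by (rule someI[of _ B]) (use Kc B in \<open>auto simp: inverts_mat_def\<close>)
  then have Bi: "Bi \<in> carrier_mat N N" "Bi * K = 1\<^sub>m N" "K * Bi = 1\<^sub>m N"
    using Kc unfolding inverts_mat_def by auto
  define r where "r = alg_rhs P G"
  have rc: "r \<in> carrier_vec N" unfolding r_def N_def alg_rhs_def Let_def using P n
    by (intro carrier_vecI) simp
  define g where "g = alg_g P a b G"
  have g: "g = Bi *\<^sub>v r" unfolding g_def alg_g_def Bi_def K_def r_def ..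
  have gd: "dim_vec g = m+n-1" using g Bi unfolding N_def by simp
  have Kg: "K *\<^sub>v g = r"
  proof -
    have "K *\<^sub>v g = (K * Bi) *\<^sub>v r" unfolding g by (rule assoc_mult_mat_vec[symmetric, OF Kc Bi(1) rc])
    then show ?thesis using Bi rc by simp
  qed
  have Krg: "Krow m n P G g"
    using K_iff[OF P da db rs cs G gd n] Kg unfolding K_def r_def by simp
  define GC where "GC = alg_GC lam P a b G"
  have dP: "dim_row P = m" "dim_col P = n" using P by auto
  have GCc: "GC \<in> carrier_mat m n" unfolding GC_def alg_GC_def Let_def dP by simp
  have GCe: "vec_cm GC $ (j*m+i) = P$$(i,j) * (g$i + yb m n g j - G$$(i,j)) / lam" if i: "i < m" and j: "j < n" for i j
  proof -
    have "vec_cm GC $ (j*m+i) = GC $$ (i,j)" by (rule vec_cm_idx[OF GCc i j])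
    also have "\<dots> = - (1/lam) * (P$$(i,j) * G$$(i,j) - P$$(i,j) * (g$i + yb m n g j))"
      unfolding GC_def alg_GC_def Let_def dP g_def[symmetric] using i j P G
      by (simp add: alg_T_def yb_def)
    also have "\<dots> = P$$(i,j) * (g$i + yb m n g j - G$$(i,j)) / lam"
      using lam by (simp add: field_simps)
    finally show ?thesis .
  qed
  have GCd: "dim_vec (vec_cm GC) = m*n" using GCc unfolding vec_cm_def by simp
  have part2: "KKT_mat lam P *\<^sub>v (vec_cm GC @\<^sub>v (- g)) = (- vec_cm G) @\<^sub>v 0\<^sub>v (m+n-1)"
    using KKT_iff[OF P Ppos lam G GCd gd m n] GCe Krg by simp
  have part3: "x = vec_cm GC \<and> y = g"
    if x: "dim_vec x = m*n" and y: "dim_vec y = m+n-1"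
      and eq: "KKT_mat lam P *\<^sub>v (x @\<^sub>v (- y)) = (- vec_cm G) @\<^sub>v 0\<^sub>v (m+n-1)" for x y
  proof -
    have F: "\<forall>i<m. \<forall>j<n. x$(j*m+i) = P$$(i,j) * (y$i + yb m n y j - G$$(i,j)) / lam"
      and Kr: "Krow m n P G y"
      using KKT_iff[OF P Ppos lam G x y m n] eq by auto
    have "K *\<^sub>v y = r" using K_iff[OF P da db rs cs G y n] Kr unfolding K_def r_def by simp
    have yc: "y \<in> carrier_vec N" using y unfolding N_def by (rule carrier_vecI)
    have "y = (Bi * K) *\<^sub>v y" using Bi yc by simp
    also have "\<dots> = Bi *\<^sub>v (K *\<^sub>v y)" by (rule assoc_mult_mat_vec[OF Bi(1) Kc yc])
    also have "\<dots> = g" using \<open>K *\<^sub>v y = r\<close> g by simp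
    finally have yg: "y = g" .
    have "x = vec_cm GC"
    proof (rule eq_vecI)
      have "\<forall>k<m*n. x $ k = vec_cm GC $ k"
        unfolding all_mn using F GCe yg by simp
      then show "\<And>k. k < dim_vec (vec_cm GC) \<Longrightarrow> x $ k = vec_cm GC $ k" using GCd by simp
    qed (use x GCd in simp)
    then show ?thesis using yg by simp
  qed
  show ?thesis
    using inv part2 part3 unfolding K_def GC_def g_def by blast
qed


end
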